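(* There exists a non-adaptive algorithm with one-sided error that, given a proximity parameter $0<\epsilon<1$, query access to a function $f\colon[n]\to\mathbb{R}$ (where $[n]=\{0,\dots,n-1\}$) and sample access to an unknown probability distribution $\mathcal{D}$ on $[n]$, accepts with probability $1$ if $f$ is convex and rejects with probability at least $2/3$ if $f$ is $\epsilon$-far from convex with respect to $\mathcal{D}$, using $O\!\left(\frac{\log n}{\epsilon}\right)$ queries to $f$ and $O\!\left(\frac1\epsilon\right)$ samples from $\mathcal{D}$.
   Context: A function $f\colon X\to\mathbb{R}$ on a finite set $X\subseteq\mathbb{R}^d$ is convex if for every finite collection $x_1,\dots,x_k\in X$ and reals $\lambda_i\ge0$ with $\sum_i\lambda_i=1$ and $\sum_i\lambda_ix_i\in X$, one has $f(\sum_i\lambda_ix_i)\le\sum_i\lambda_if(x_i)$. For a distribution $\mathcal{D}$ on $X$, a function $g$ is $\epsilon$-far from convex with respect to $\mathcal{D}$ if $\Pr_{x\sim\mathcal{D}}[g(x)\ne h(x)]\ge\epsilon$ for every convex $h\colon X\to\mathbb{R}$. Non-adaptive means all queries are chosen before any function value is observed. *)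

theory Defs
  imports "HOL-Probability.Probability_Mass_Function"
begin

text \<open>A function [n] -> R is represented by f :: nat => real; only its values on {..<n} matter.\<close>
definition convex_on_grid :: "nat \<Rightarrow> (nat \<Rightarrow> real) \<Rightarrow> bool" where
  "convex_on_grid n f \<longleftrightarrow>
     (\<forall>(k::nat) (x::nat \<Rightarrow> nat) (lam::nat \<Rightarrow> real) (y::nat).
        (\<forall>i<k. x i < n \<and> lam i \<ge> 0) \<and> (\<Sum>i<k. lam i) = 1 \<and> y < n \<and>
        (\<Sum>i<k. lam i * real (x i)) = real y
        \<longrightarrow> f y \<le> (\<Sum>i<k. lam i * f (x i)))"

definition far_from_convex :: "nat \<Rightarrow> nat pmf \<Rightarrow> real \<Rightarrow> (nat \<Rightarrow> real) \<Rightarrow> bool" where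
  "far_from_convex n D eps f \<longleftrightarrow>
     (\<forall>h. convex_on_grid n h \<longrightarrow> measure_pmf.prob D {x. f x \<noteq> h x} \<ge> eps)"

fun iid_samples :: "'a pmf \<Rightarrow> nat \<Rightarrow> 'a list pmf" where
  "iid_samples D 0 = return_pmf []"
| "iid_samples D (Suc k) =
     bind_pmf D (\<lambda>x. bind_pmf (iid_samples D k) (\<lambda>xs. return_pmf (x # xs)))"

text \<open>A non-adaptive sample-based tester with parameters (n, eps):
  it draws internal randomness r from R n eps, draws m n eps samples from D,
  then (as a function of r and the samples only, i.e. before seeing any value of f)
  chooses the list of query points Q n eps r s, and finally decides
  (True = accept) from r, the samples and the answers to its queries. \<close>
definition tester_run ::
  "(nat \<Rightarrow> real \<Rightarrow> nat pmf) \<Rightarrow> (nat \<Rightarrow> real \<Rightarrow> nat) \<Rightarrow>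
   (nat \<Rightarrow> real \<Rightarrow> nat \<Rightarrow> nat list \<Rightarrow> nat list) \<Rightarrow>
   (nat \<Rightarrow> real \<Rightarrow> nat \<Rightarrow> nat list \<Rightarrow> real list \<Rightarrow> bool) \<Rightarrow>
   nat \<Rightarrow> real \<Rightarrow> nat pmf \<Rightarrow> (nat \<Rightarrow> real) \<Rightarrow> bool pmf" where
  "tester_run R m Q Dec n eps D f =
     bind_pmf (R n eps) (\<lambda>r. bind_pmf (iid_samples D (m n eps)) (\<lambda>s.
       return_pmf (Dec n eps r s (map f (Q n eps r s)))))"

end

theory Submission
  imports Defs
begin


function Qt :: "nat \<Rightarrow> nat \<Rightarrow> nat \<Rightarrow> nat list" where
  "Qt l r x = (if r \<le> l then [l] else
     [l, r, (l+r) div 2, Suc ((l+r) div 2)] @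
     (if x \<le> (l+r) div 2 then Qt l ((l+r) div 2) x else Qt (Suc ((l+r) div 2)) r x))"
  by pat_completeness auto
termination by (relation "Wellfounded.measure (\<lambda>(l,r,x). r - l)") auto

declare Qt.simps[simp del]

definition Tm :: "(nat \<Rightarrow> real) \<Rightarrow> nat \<Rightarrow> nat \<Rightarrow> nat \<Rightarrow> bool" where
  "Tm f a b c \<longleftrightarrow> (real c - real a) * f b \<le> (real c - real b) * f a + (real b - real a) * f c"

definition goodS :: "(nat \<Rightarrow> real) \<Rightarrow> nat set \<Rightarrow> bool" where
  "goodS f S \<longleftrightarrow> (\<forall>a\<in>S. \<forall>b\<in>S. \<forall>c\<in>S. a < b \<and> b < c \<longrightarrow> Tm f a b c)"

definition sl :: "(nat \<Rightarrow> real) \<Rightarrow> nat \<Rightarrow> nat \<Rightarrow> real" where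
  "sl f a b = (f b - f a) / (real b - real a)"

lemma divle: "(p::real) > 0 \<Longrightarrow> q > 0 \<Longrightarrow> x / p \<le> y / q \<longleftrightarrow> x * q \<le> y * p"
  by (simp add: field_simps)

lemma Tm_sl: assumes "a < b" "b < c" shows "Tm f a b c \<longleftrightarrow> sl f a b \<le> sl f b c"
proof -
  have p1: "real b - real a > 0" "real c - real b > 0" using assms by auto
  have "sl f a b \<le> sl f b c \<longleftrightarrow> (f b - f a) * (real c - real b) \<le> (f c - f b) * (real b - real a)"
    unfolding sl_def using p1 by (simp add: divle) 
  also have "\<dots> \<longleftrightarrow> Tm f a b c" unfolding Tm_def by (simp add: algebra_simps)
  finally show ?thesis by simp
qed
lemma chord: assumes "a < b" "b < c"
  shows "(sl f a b \<le> sl f b c \<longleftrightarrow> sl f a b \<le> sl f a c) \<and> (sl f a b \<le> sl f b c \<longleftrightarrow> sl f a c \<le> sl f b c)"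
proof -
  define u where "u = sl f a b" define v where "v = sl f b c"
  define p where "p = real b - real a" define q where "q = real c - real b"
  have pq: "p > 0" "q > 0" "real c - real a = p + q" using assms by (auto simp: p_def q_def)
  have e1: "p * u = f b - f a" "q * v = f c - f b"
    unfolding u_def v_def sl_def p_def q_def using pq(1,2) by (auto simp: p_def q_def)
  have e2: "sl f a c = (p * u + q * v) / (p + q)" unfolding e1 sl_def pq(3)[symmetric] by simp
  have x1: "u * (p + q) = p * u + q * u" "v * (p + q) = p * v + q * v" by (simp_all add: distrib_left mult.commute)
  have pq0: "p + q > 0" using pq by simp
  have "u \<le> (p * u + q * v) / (p + q) \<longleftrightarrow> u * (p + q) \<le> p * u + q * v"
    using pq0 by (rule pos_le_divide_eq)
  also have "\<dots> \<longleftrightarrow> q * u \<le> q * v" using x1 by linarith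
  also have "\<dots> \<longleftrightarrow> u \<le> v" using pq by simp
  finally have A: "u \<le> v \<longleftrightarrow> u \<le> (p * u + q * v) / (p + q)" by simp
  have "(p * u + q * v) / (p + q) \<le> v \<longleftrightarrow> p * u + q * v \<le> v * (p + q)"
    using pq0 by (rule pos_divide_le_eq)
  also have "\<dots> \<longleftrightarrow> p * u \<le> p * v" using x1 by linarith
  also have "\<dots> \<longleftrightarrow> u \<le> v" using pq by simp
  finally have B: "u \<le> v \<longleftrightarrow> (p * u + q * v) / (p + q) \<le> v" by simp
  show ?thesis using A B e2 by (simp add: u_def v_def)
qed


lemma goodS_sl: "goodS f S \<Longrightarrow> a \<in> S \<Longrightarrow> b \<in> S \<Longrightarrow> c \<in> S \<Longrightarrow> a < b \<Longrightarrow> b < c \<Longrightarrow> sl f a b \<le> sl f b c"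
  unfolding goodS_def using Tm_sl by blast

lemma goodS_mono: "goodS f S \<Longrightarrow> T \<subseteq> S \<Longrightarrow> goodS f T"
  unfolding goodS_def by blast

lemma Qt_basic:
  assumes "l < r"
  shows "l \<in> set (Qt l r x)" "r \<in> set (Qt l r x)" "(l+r) div 2 \<in> set (Qt l r x)" "Suc ((l+r) div 2) \<in> set (Qt l r x)"
    "x \<le> (l+r) div 2 \<Longrightarrow> set (Qt l ((l+r) div 2) x) \<subseteq> set (Qt l r x)"
    "\<not> x \<le> (l+r) div 2 \<Longrightarrow> set (Qt (Suc ((l+r) div 2)) r x) \<subseteq> set (Qt l r x)"
  using assms by (subst Qt.simps; auto)+

lemma Qt_self: "l \<le> x \<Longrightarrow> x \<le> r \<Longrightarrow> x \<in> set (Qt l r x)"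
proof (induction l r x rule: Qt.induct)
  case (1 l r x)
  show ?case
  proof (cases "r \<le> l")
    case True then show ?thesis using 1 by (subst Qt.simps) auto
  next
    case False
    then show ?thesis using 1 by (subst Qt.simps) (auto simp: Let_def)
  qed
qed

lemma Qt_range: "set (Qt l r x) \<subseteq> {l..max l r}"
proof (induction l r x rule: Qt.induct)
  case (1 l r x)
  show ?case
  proof (cases "r \<le> l")
    case True then show ?thesis using 1 by (subst Qt.simps) auto
  next
    case False
    have h1: "x \<le> (l+r) div 2 \<Longrightarrow> set (Qt l ((l+r) div 2) x) \<subseteq> {l..r}"
    proof -
      assume x: "x \<le> (l+r) div 2"
      have "(l+r) div 2 \<le> r" using False by auto
      then have "{l..max l ((l+r) div 2)} \<subseteq> {l..r}" using False by auto
      then show ?thesis using 1(1)[OF False x] by blast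
    qed
    have h2: "\<not> x \<le> (l+r) div 2 \<Longrightarrow> set (Qt (Suc ((l+r) div 2)) r x) \<subseteq> {l..r}"
    proof -
      assume x: "\<not> x \<le> (l+r) div 2"
      have "{Suc ((l+r) div 2)..max (Suc ((l+r) div 2)) r} \<subseteq> {l..r}" using False by auto
      then show ?thesis using 1(2)[OF False x] by blast
    qed
    have "set (Qt l r x) \<subseteq> {l..r}"
      using False h1 h2 by (subst Qt.simps) auto
    then show ?thesis using False by auto
  qed
qed

lemma Qt_length: "r - l < 2^k \<Longrightarrow> length (Qt l r x) \<le> 4*k+1"
proof (induction l r x arbitrary: k rule: Qt.induct)
  case (1 l r x)
  show ?case
  proof (cases "r \<le> l")
    case True then show ?thesis by (subst Qt.simps) auto
  next
    case False
    then obtain k' where k: "k = Suc k'" using 1(3) by (cases k) auto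
    have a: "(l+r) div 2 - l < 2^k'" "r - Suc ((l+r) div 2) < 2^k'" using 1(3) False k by auto
    show ?thesis using 1(1)[OF False _ a(1)] 1(2)[OF False _ a(2)] False k
      by (subst Qt.simps) auto
  qed
qed

lemma cross:
  fixes f :: "nat \<Rightarrow> real"
  assumes "a \<le> m" "m < b" "goodS f Sa" "goodS f Sb" "a \<in> Sa" "m \<in> Sa" "Suc m \<in> Sa"
    "m \<in> Sb" "Suc m \<in> Sb" "b \<in> Sb"
  shows "sl f a b \<le> sl f m b" "sl f a (Suc m) \<le> sl f a b"
proof -
  have sb: "sl f m (Suc m) \<le> sl f m b"
  proof (cases "b = Suc m")
    case False
    then have "sl f m (Suc m) \<le> sl f (Suc m) b" using goodS_sl[OF assms(4,8,9,10)] assms by auto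
    then show ?thesis using chord[of m "Suc m" b f] False assms by auto
  qed simp
  have sb2: "sl f m (Suc m) \<le> sl f (Suc m) b" if "b \<noteq> Suc m"
    using goodS_sl[OF assms(4,8,9,10)] assms that by auto
  show "sl f a b \<le> sl f m b"
  proof (cases "a = m")
    case False
    then have "sl f a m \<le> sl f m (Suc m)" using goodS_sl[OF assms(3,5,6,7)] assms by auto
    then have "sl f a m \<le> sl f m b" using sb by linarith
    then show ?thesis using chord[of a m b f] False assms by auto
  qed simp
  have sa: "sl f a (Suc m) \<le> sl f m (Suc m)"
  proof (cases "a = m")
    case False
    then have "sl f a m \<le> sl f m (Suc m)" using goodS_sl[OF assms(3,5,6,7)] assms by auto
    then show ?thesis using chord[of a m "Suc m" f] False assms by auto
  qed simp
  show "sl f a (Suc m) \<le> sl f a b"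
  proof (cases "b = Suc m")
    case False
    have "sl f a (Suc m) \<le> sl f (Suc m) b" using sa sb2[OF False] by linarith
    then show ?thesis using chord[of a "Suc m" b f] False assms by auto
  qed simp
qed

lemma key:
  fixes f :: "nat \<Rightarrow> real"
  assumes "l \<le> a" "a < b" "b \<le> r" "set (Qt l r a) \<subseteq> Sa" "set (Qt l r b) \<subseteq> Sb" "goodS f Sa" "goodS f Sb"
  shows "(\<forall>p. r < p \<and> p \<in> Sa \<and> p \<in> Sb \<longrightarrow> sl f a b \<le> sl f b p) \<and>
         (\<forall>p. p < l \<and> p \<in> Sa \<and> p \<in> Sb \<longrightarrow> sl f p a \<le> sl f a b)"
  using assms
proof (induction "r - l" arbitrary: l r a b rule: less_induct)
  case less
  have lr: "l < r" using less.prems by auto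
  define m where "m = (l+r) div 2"
  have mlr: "l \<le> m" "m < r" using lr by (auto simp: m_def)
  have Qa: "l \<in> Sa" "r \<in> Sa" "m \<in> Sa" "Suc m \<in> Sa" using Qt_basic[OF lr, of a] less.prems m_def by auto
  have Qb: "l \<in> Sb" "r \<in> Sb" "m \<in> Sb" "Suc m \<in> Sb" using Qt_basic[OF lr, of b] less.prems m_def by auto
  have aS: "a \<in> Sa" using Qt_self[of l a r] less.prems by auto
  have bS: "b \<in> Sb" using Qt_self[of l b r] less.prems by auto
  consider (L) "b \<le> m" | (R) "m < a" | (X) "a \<le> m" "m < b" by linarith
  then show ?case
  proof cases
    case L
    have s: "set (Qt l m a) \<subseteq> Sa" "set (Qt l m b) \<subseteq> Sb"
      using Qt_basic(5)[OF lr, of a] Qt_basic(5)[OF lr, of b] L less.prems by (auto simp: m_def)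
    have "m - l < r - l" using mlr by auto
    note ih = less.hyps[OF this less.prems(1,2) L s less.prems(6,7)]
    show ?thesis using ih mlr by (meson less_trans)
  next
    case R
    have s: "set (Qt (Suc m) r a) \<subseteq> Sa" "set (Qt (Suc m) r b) \<subseteq> Sb"
      using Qt_basic(6)[OF lr, of a] Qt_basic(6)[OF lr, of b] R less.prems by (auto simp: m_def)
    have "r - Suc m < r - l" using mlr by auto
    have "Suc m \<le> a" using R by simp
    note ih = less.hyps[OF \<open>r - Suc m < r - l\<close> this less.prems(2,3) s less.prems(6,7)]
    show ?thesis using ih mlr by (meson less_le_trans le_SucI)
  next
    case X
    note c = cross[OF X less.prems(6,7) aS Qa(3,4) Qb(3,4) bS]
    have 1: "sl f a b \<le> sl f b p" if "r < p" "p \<in> Sa" "p \<in> Sb" for p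
    proof -
      have "sl f m b \<le> sl f b p" using goodS_sl[OF less.prems(7) Qb(3) bS that(3)] X that less.prems by auto
      then show ?thesis using c(1) by linarith
    qed
    have 2: "sl f p a \<le> sl f a b" if "p < l" "p \<in> Sa" "p \<in> Sb" for p
    proof -
      have "sl f p a \<le> sl f a (Suc m)" using goodS_sl[OF less.prems(6) that(2) aS Qa(4)] X that less.prems by auto
      then show ?thesis using c(2) by linarith
    qed
    show ?thesis using 1 2 by blast
  qed
qed

lemma triple:
  fixes f :: "nat \<Rightarrow> real"
  assumes "l \<le> a" "a < b" "b < c" "c \<le> r" "set (Qt l r a) \<subseteq> Sa" "set (Qt l r b) \<subseteq> Sb"
    "set (Qt l r c) \<subseteq> Sc" "goodS f Sa" "goodS f Sb" "goodS f Sc"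
  shows "sl f a b \<le> sl f b c"
  using assms
proof (induction "r - l" arbitrary: l r a b c rule: less_induct)
  case less
  have lr: "l < r" using less.prems by auto
  define m where "m = (l+r) div 2"
  have mlr: "l \<le> m" "m < r" using lr by (auto simp: m_def)
  have Qa: "l \<in> Sa" "r \<in> Sa" "m \<in> Sa" "Suc m \<in> Sa" using Qt_basic[OF lr, of a] less.prems m_def by auto
  have Qb: "l \<in> Sb" "r \<in> Sb" "m \<in> Sb" "Suc m \<in> Sb" using Qt_basic[OF lr, of b] less.prems m_def by auto
  have Qc: "l \<in> Sc" "r \<in> Sc" "m \<in> Sc" "Suc m \<in> Sc" using Qt_basic[OF lr, of c] less.prems m_def by auto
  have aS: "a \<in> Sa" using Qt_self[of l a r] less.prems by auto
  have bS: "b \<in> Sb" using Qt_self[of l b r] less.prems by auto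
  have cS: "c \<in> Sc" using Qt_self[of l c r] less.prems by auto
  consider (L) "c \<le> m" | (R) "m < a" | (X1) "a \<le> m" "m < c" "b \<le> m" | (X2) "a \<le> m" "m < b" by linarith
  then show ?case
  proof cases
    case L
    have s: "set (Qt l m a) \<subseteq> Sa" "set (Qt l m b) \<subseteq> Sb" "set (Qt l m c) \<subseteq> Sc"
      using Qt_basic(5)[OF lr, of a] Qt_basic(5)[OF lr, of b] Qt_basic(5)[OF lr, of c] L less.prems
      by (auto simp: m_def)
    have ml: "m - l < r - l" using mlr by auto
    show ?thesis using less.hyps[OF ml less.prems(1,2,3) L s less.prems(8,9,10)] .
  next
    case R
    have s: "set (Qt (Suc m) r a) \<subseteq> Sa" "set (Qt (Suc m) r b) \<subseteq> Sb" "set (Qt (Suc m) r c) \<subseteq> Sc"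
      using Qt_basic(6)[OF lr, of a] Qt_basic(6)[OF lr, of b] Qt_basic(6)[OF lr, of c] R less.prems
      by (auto simp: m_def)
    have "r - Suc m < r - l" using mlr by auto
    have sm: "Suc m \<le> a" using R by simp
    show ?thesis using less.hyps[OF \<open>r - Suc m < r - l\<close> sm less.prems(2,3,4) s less.prems(8,9,10)] .
  next
    case X1
    have s: "set (Qt l m a) \<subseteq> Sa" "set (Qt l m b) \<subseteq> Sb"
      using Qt_basic(5)[OF lr, of a] Qt_basic(5)[OF lr, of b] X1 less.prems by (auto simp: m_def)
    have k: "sl f a b \<le> sl f b (Suc m)"
      using key[OF less.prems(1,2) X1(3) s less.prems(8,9)] Qa Qb by auto
    have "sl f b (Suc m) \<le> sl f b c"
      using cross(2)[OF X1(3,2) less.prems(9,10) bS Qb(3,4) Qc(3,4) cS] .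
    then show ?thesis using k by linarith
  next
    case X2
    have s: "set (Qt (Suc m) r b) \<subseteq> Sb" "set (Qt (Suc m) r c) \<subseteq> Sc"
      using Qt_basic(6)[OF lr, of b] Qt_basic(6)[OF lr, of c] X2 less.prems by (auto simp: m_def)
    have k: "sl f m b \<le> sl f b c"
      using key[of "Suc m" b c r Sb Sc f, OF _ less.prems(3,4) s less.prems(9,10)] X2 Qb Qc by auto
    have "sl f a b \<le> sl f m b"
      using cross(1)[OF X2 less.prems(8,9) aS Qa(3,4) Qb(3,4) bS] .
    then show ?thesis using k by linarith
  qed
qed

lemma extend:
  fixes f :: "nat \<Rightarrow> real" and G :: "nat set"
  assumes fin: "finite G" and tr: "\<forall>a\<in>G. \<forall>b\<in>G. \<forall>c\<in>G. a < b \<and> b < c \<longrightarrow> sl f a b \<le> sl f b c"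
  shows "\<exists>h. convex_on_grid n h \<and> (\<forall>x\<in>G. h x = f x)"
proof -
  define s where "s x = (if \<exists>y\<in>G. x < y then Min ((\<lambda>y. sl f x y) ` {y\<in>G. x < y})
      else if \<exists>y\<in>G. y < x then Max ((\<lambda>y. sl f y x) ` {y\<in>G. y < x}) else 0)" for x
  define L where "L x t = f x + s x * (t - real x)" for x t
  define h where "h t = (if G = {} then 0 else Max ((\<lambda>x. L x (real t)) ` G))" for t
  have fin1: "finite {y\<in>G. x < y}" "finite {y\<in>G. y < x}" for x using fin by auto
  have below: "L x (real y) \<le> f y" if xy: "x \<in> G" "y \<in> G" for x y
  proof -
    consider "y = x" | "x < y" | "y < x" by linarith
    then show ?thesis
    proof cases
      case 1 then show ?thesis by (simp add: L_def)
    next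
      case 2
      then have "s x = Min ((\<lambda>y. sl f x y) ` {y\<in>G. x < y})" using xy by (auto simp: s_def)
      also have "\<dots> \<le> sl f x y" using 2 xy fin1 by (intro Min_le) auto
      finally have "s x * (real y - real x) \<le> sl f x y * (real y - real x)"
        using 2 by (intro mult_right_mono) auto
      also have "\<dots> = f y - f x" using 2 by (simp add: sl_def)
      finally show ?thesis by (simp add: L_def)
    next
      case 3
      have ge: "sl f y x \<le> s x"
      proof (cases "\<exists>z\<in>G. x < z")
        case True
        then have "s x = Min ((\<lambda>z. sl f x z) ` {z\<in>G. x < z})" by (auto simp: s_def)
        moreover have "sl f y x \<le> Min ((\<lambda>z. sl f x z) ` {z\<in>G. x < z})"
          using True fin1 tr xy 3 by (subst Min_ge_iff) auto
        ultimately show ?thesis by simp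
      next
        case False
        then have "s x = Max ((\<lambda>z. sl f z x) ` {z\<in>G. z < x})" using 3 xy by (auto simp: s_def)
        moreover have "sl f y x \<le> Max ((\<lambda>z. sl f z x) ` {z\<in>G. z < x})"
          using fin1 xy 3 by (intro Max_ge) auto
        ultimately show ?thesis by simp
      qed
      have "sl f y x * (real x - real y) \<le> s x * (real x - real y)"
        using ge 3 by (intro mult_right_mono) auto
      moreover have "sl f y x * (real x - real y) = f x - f y" using 3 by (simp add: sl_def)
      ultimately show ?thesis by (simp add: L_def algebra_simps)
    qed
  qed
  have hG: "h x = f x" if "x \<in> G" for x
  proof -
    have "Max ((\<lambda>x. L x (real x')) ` G) = f x'" if "x' \<in> G" for x'
      using fin that below by (intro Max_eqI) (auto simp: L_def intro!: rev_image_eqI[of x'])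
    then show ?thesis using that by (auto simp: h_def)
  qed
  have cv: "convex_on_grid n h"
    unfolding convex_on_grid_def
  proof (intro allI impI)
    fix k :: nat and x :: "nat \<Rightarrow> nat" and lam :: "nat \<Rightarrow> real" and y :: nat
    assume A: "(\<forall>i<k. x i < n \<and> 0 \<le> lam i) \<and> sum lam {..<k} = 1 \<and> y < n \<and>
      (\<Sum>i<k. lam i * real (x i)) = real y"
    show "h y \<le> (\<Sum>i<k. lam i * h (x i))"
    proof (cases "G = {}")
      case True then show ?thesis by (simp add: h_def)
    next
      case False
      have "Max ((\<lambda>x. L x (real y)) ` G) \<in> (\<lambda>x. L x (real y)) ` G" using False fin by (intro Max_in) auto
      then obtain x0 where x0: "x0 \<in> G" "h y = L x0 (real y)" using False by (auto simp: h_def)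
      have "(\<Sum>i<k. lam i * L x0 (real (x i)))
          = f x0 * (\<Sum>i<k. lam i) + s x0 * ((\<Sum>i<k. lam i * real (x i)) - real x0 * (\<Sum>i<k. lam i))"
        by (simp add: L_def algebra_simps sum.distrib sum_distrib_left sum_distrib_right sum_subtractf)
      also have "\<dots> = L x0 (real y)" using A by (simp add: L_def)
      finally have e: "h y = (\<Sum>i<k. lam i * L x0 (real (x i)))" using x0 by simp
      have "L x0 (real (x i)) \<le> h (x i)" for i
        using fin x0 False by (auto simp: h_def intro: Max_ge)
      then have "(\<Sum>i<k. lam i * L x0 (real (x i))) \<le> (\<Sum>i<k. lam i * h (x i))"
        using A by (intro sum_mono mult_left_mono) auto
      then show ?thesis using e by simp
    qed
  qed
  show ?thesis using cv hG by blast
qed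
lemma iid_set: "s \<in> set_pmf (iid_samples D k) \<Longrightarrow> length s = k \<and> set s \<subseteq> set_pmf D"
  by (induction k arbitrary: s) fastforce+

lemma iid_emeasure:
  "emeasure (measure_pmf (iid_samples D k)) {s. \<forall>x\<in>set s. P x} = ennreal ((measure_pmf.prob D {x. P x})^k)"
proof (induction k)
  case 0
  then show ?case by simp
next
  case (Suc k)
  define E where "E = {s. \<forall>x\<in>set s. P x}"
  define p where "p = measure_pmf.prob D {x. P x}"
  have inner: "emeasure (measure_pmf (bind_pmf (iid_samples D k) (\<lambda>xs. return_pmf (x # xs)))) E
      = indicator {x. P x} x * ennreal (p ^ k)" for x
  proof -
    have "emeasure (measure_pmf (bind_pmf (iid_samples D k) (\<lambda>xs. return_pmf (x # xs)))) E
        = (\<integral>\<^sup>+xs. indicator E (x # xs) \<partial>measure_pmf (iid_samples D k))"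
      by (simp add: emeasure_bind_pmf)
    also have "\<dots> = (\<integral>\<^sup>+xs. indicator {x. P x} x * indicator E xs \<partial>measure_pmf (iid_samples D k))"
      by (intro nn_integral_cong) (auto simp: E_def indicator_def)
    also have "\<dots> = indicator {x. P x} x * emeasure (measure_pmf (iid_samples D k)) E"
      by (simp add: nn_integral_cmult)
    also have "\<dots> = indicator {x. P x} x * ennreal (p ^ k)"
      using Suc.IH by (simp add: E_def p_def)
    finally show ?thesis .
  qed
  have "emeasure (measure_pmf (iid_samples D (Suc k))) E
      = (\<integral>\<^sup>+x. emeasure (measure_pmf (bind_pmf (iid_samples D k) (\<lambda>xs. return_pmf (x # xs)))) E \<partial>measure_pmf D)"
    by (subst iid_samples.simps) (rule emeasure_bind_pmf)
  also have "\<dots> = (\<integral>\<^sup>+x. indicator {x. P x} x * ennreal (p ^ k) \<partial>measure_pmf D)"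
    by (simp only: inner)
  also have "\<dots> = (\<integral>\<^sup>+x. ennreal (p ^ k) * indicator {x. P x} x \<partial>measure_pmf D)"
    by (simp add: mult.commute)
  also have "\<dots> = ennreal (p ^ k) * emeasure (measure_pmf D) {x. P x}"
    by (simp add: nn_integral_cmult)
  also have "\<dots> = ennreal (p ^ Suc k)"
    by (simp add: measure_pmf.emeasure_eq_measure p_def ennreal_mult'' mult.commute)
  finally show ?case by (simp add: E_def p_def)
qed

lemma iid_prob:
  "measure_pmf.prob (iid_samples D k) {s. \<forall>x\<in>set s. P x} = (measure_pmf.prob D {x. P x})^k"
  using iid_emeasure[of D k P] by (simp add: measure_pmf.emeasure_eq_measure)




definition mS :: "nat \<Rightarrow> real \<Rightarrow> nat" where "mS n eps = nat \<lceil>2 / eps\<rceil>"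

definition QS :: "nat \<Rightarrow> real \<Rightarrow> nat \<Rightarrow> nat list \<Rightarrow> nat list" where
  "QS n eps r s = concat (map (Qt 0 (n - 1)) (take (mS n eps) s))"

definition DecS :: "nat \<Rightarrow> real \<Rightarrow> nat \<Rightarrow> nat list \<Rightarrow> real list \<Rightarrow> bool" where
  "DecS n eps r s vals = (let qs = QS n eps r s in
     \<forall>i<length qs. \<forall>j<length qs. \<forall>k<length qs. qs!i < qs!j \<and> qs!j < qs!k \<longrightarrow>
       (real (qs!k) - real (qs!i)) * vals!j \<le> (real (qs!k) - real (qs!j)) * vals!i + (real (qs!j) - real (qs!i)) * vals!k)"

lemma dec_iff: "DecS n eps r s (map f (QS n eps r s)) \<longleftrightarrow> goodS f (set (QS n eps r s))"
proof
  assume A: "DecS n eps r s (map f (QS n eps r s))"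
  show "goodS f (set (QS n eps r s))"
    unfolding goodS_def
  proof (intro ballI impI)
    fix a b c assume "a \<in> set (QS n eps r s)" "b \<in> set (QS n eps r s)" "c \<in> set (QS n eps r s)" "a < b \<and> b < c"
    then obtain i j k where "i < length (QS n eps r s)" "j < length (QS n eps r s)" "k < length (QS n eps r s)"
      "a = QS n eps r s ! i" "b = QS n eps r s ! j" "c = QS n eps r s ! k" "a < b" "b < c"
      by (auto simp: in_set_conv_nth)
    then show "Tm f a b c" using A unfolding DecS_def Let_def Tm_def by auto
  qed
next
  assume A: "goodS f (set (QS n eps r s))"
  show "DecS n eps r s (map f (QS n eps r s))"
    unfolding DecS_def Let_def
  proof (intro allI impI)
    fix i j k assume B: "i < length (QS n eps r s)" "j < length (QS n eps r s)" "k < length (QS n eps r s)"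
      "QS n eps r s ! i < QS n eps r s ! j \<and> QS n eps r s ! j < QS n eps r s ! k"
    then have "Tm f (QS n eps r s ! i) (QS n eps r s ! j) (QS n eps r s ! k)"
      using A unfolding goodS_def by (meson nth_mem)
    then show "(real (QS n eps r s ! k) - real (QS n eps r s ! i)) * map f (QS n eps r s) ! j
         \<le> (real (QS n eps r s ! k) - real (QS n eps r s ! j)) * map f (QS n eps r s) ! i +
            (real (QS n eps r s ! j) - real (QS n eps r s ! i)) * map f (QS n eps r s) ! k"
      using B by (simp add: Tm_def)
  qed
qed

lemma QS_range: "1 \<le> n \<Longrightarrow> q \<in> set (QS n eps r s) \<Longrightarrow> q < n"
  using Qt_range[of 0 "n - 1"] by (fastforce simp: QS_def)

lemma convex_Tm:
  assumes cv: "convex_on_grid n f" and abc: "a < b" "b < c" "c < n"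
  shows "Tm f a b c"
proof -
  define x where "x = (\<lambda>i::nat. if i = 0 then a else c)"
  define lam where "lam = (\<lambda>i::nat. if i = 0 then (real c - real b) / (real c - real a) else (real b - real a) / (real c - real a))"
  have ca: "real c - real a > 0" using abc by auto
  have s1: "(\<Sum>i<2. lam i) = 1" using ca
    by (simp add: lam_def numeral_2_eq_2 add_divide_distrib[symmetric])
  have q: "(real c - real b) * real a + (real b - real a) * real c = real b * (real c - real a)"
    by (simp add: algebra_simps)
  have "(\<Sum>i<2. lam i * real (x i)) = ((real c - real b) * real a + (real b - real a) * real c) / (real c - real a)"
    by (simp add: lam_def x_def numeral_2_eq_2 add_divide_distrib)
  then have s2: "(\<Sum>i<2. lam i * real (x i)) = real b" using ca q by simp
  have nn: "\<forall>i<2. x i < n \<and> lam i \<ge> 0" using abc ca by (auto simp: x_def lam_def)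
  have inst: "(\<forall>i<2. x i < n \<and> 0 \<le> lam i) \<and> sum lam {..<2} = 1 \<and> b < n \<and>
      (\<Sum>i<2. lam i * real (x i)) = real b \<longrightarrow> f b \<le> (\<Sum>i<2. lam i * f (x i))"
    using cv unfolding convex_on_grid_def by blast
  have bn: "b < n" using abc by simp
  have "f b \<le> (\<Sum>i<2. lam i * f (x i))" using inst nn s1 bn s2 by blast
  also have "\<dots> = ((real c - real b) * f a + (real b - real a) * f c) / (real c - real a)"
    by (simp add: lam_def x_def numeral_2_eq_2 add_divide_distrib)
  finally have "f b * (real c - real a) \<le> (real c - real b) * f a + (real b - real a) * f c"
    using pos_le_divide_eq[OF ca] by blast
  then show ?thesis unfolding Tm_def by (simp only: mult.commute)
qed

lemma natceil: "0 \<le> x \<Longrightarrow> x \<le> real (nat \<lceil>x\<rceil>) \<and> real (nat \<lceil>x\<rceil>) \<le> x + 1"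
proof -
  assume x: "0 \<le> x"
  have "real (nat \<lceil>x\<rceil>) = real_of_int \<lceil>x\<rceil>" using x by simp
  moreover have "x \<le> real_of_int \<lceil>x\<rceil>" by (rule le_of_int_ceiling)
  moreover have "real_of_int \<lceil>x\<rceil> \<le> x + 1" by (rule of_int_ceiling_le_add_one)
  ultimately show ?thesis by simp
qed

lemma sum_list_le: "(\<forall>x\<in>set xs. g x \<le> B) \<Longrightarrow> sum_list (map g xs) \<le> length xs * (B::nat)"
  by (induction xs) auto

lemma ln2_ge: "ln (2::real) \<ge> 1/2"
proof -
  have "exp 1 \<le> (4::real)" using exp_le by simp
  then have "1 \<le> ln (4::real)" using ln_le_cancel_iff[of "exp 1" 4] by simp
  moreover have "ln (4::real) = 2 * ln 2" using ln_mult[of 2 2] by simp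
  ultimately show ?thesis by simp
qed

lemma length_bound:
  assumes n: "2 \<le> n" and e: "0 < eps" "eps < 1"
  shows "real (length (QS n eps r s)) \<le> 60 * ln (real n) / eps"
proof -
  define k where "k = nat \<lceil>log 2 (real n)\<rceil>"
  have lnn: "ln (real n) \<ge> ln 2" using n by simp
  have l2: "ln (2::real) \<ge> 1/2" by (rule ln2_ge)
  have lg: "log 2 (real n) = ln (real n) / ln 2" by (simp add: log_def)
  have lgpos: "log 2 (real n) \<ge> 0" using n by simp
  have "real n = 2 powr (log 2 (real n))" using n by simp
  also have "\<dots> \<le> 2 powr (real k)" unfolding k_def using natceil[OF lgpos] by (intro powr_mono) auto
  also have "\<dots> = 2 ^ k" by (simp add: powr_realpow)
  finally have "real n \<le> real (2 ^ k)" by simp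
  then have "n \<le> 2 ^ k" by (simp only: of_nat_le_iff)
  then have nk: "n - 1 - 0 < 2 ^ k" using n by simp
  have each: "length (Qt 0 (n - 1) x) \<le> 4 * k + 1" for x using Qt_length[OF nk] .
  have "length (QS n eps r s) = sum_list (map (\<lambda>x. length (Qt 0 (n - 1) x)) (take (mS n eps) s))"
    by (simp add: QS_def length_concat comp_def)
  also have "\<dots> \<le> length (take (mS n eps) s) * (4 * k + 1)" using each by (intro sum_list_le) auto
  also have "\<dots> \<le> mS n eps * (4 * k + 1)" by (intro mult_right_mono) auto
  finally have "real (length (QS n eps r s)) \<le> real (mS n eps * (4 * k + 1))" by (simp only: of_nat_le_iff)
  then have L: "real (length (QS n eps r s)) \<le> real (mS n eps) * (4 * real k + 1)" by (simp add: distrib_left)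
  have m: "real (mS n eps) \<le> 3 / eps"
  proof -
    have "real (mS n eps) \<le> 2 / eps + 1" unfolding mS_def using e natceil[of "2 / eps"] by simp
    also have "\<dots> \<le> 3 / eps" using e by (simp add: field_simps)
    finally show ?thesis .
  qed
  have kb: "real k \<le> log 2 (real n) + 1" unfolding k_def using natceil[OF lgpos] by linarith
  have lnpos: "ln (real n) \<ge> 0" using n by simp
  have "ln (real n) / ln 2 \<le> ln (real n) / (1/2)" using l2 lnpos by (intro divide_left_mono) auto
  then have "log 2 (real n) \<le> 2 * ln (real n)" unfolding lg by simp
  then have "4 * real k + 1 \<le> 18 * ln (real n)" using kb l2 lnn by linarith
  then have "real (mS n eps) * (4 * real k + 1) \<le> (3 / eps) * (18 * ln (real n))"
    using m e by (intro mult_mono) auto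
  also have "\<dots> = (54 * ln (real n)) / eps" by simp
  also have "\<dots> \<le> 60 * ln (real n) / eps" using e lnpos by (intro divide_right_mono) auto
  finally show ?thesis using L by linarith
qed

lemma m_bound: "0 < eps \<Longrightarrow> eps < 1 \<Longrightarrow> real (mS n eps) \<le> 60 / eps"
proof -
  assume e: "0 < eps" "eps < 1"
  have "real (mS n eps) \<le> 2 / eps + 1" unfolding mS_def using e natceil[of "2 / eps"] by simp
  also have "\<dots> \<le> 60 / eps" using e by (simp add: field_simps)
  finally show ?thesis .
qed

lemma exp_part:
  assumes e: "0 < eps" "eps < 1" and p: "0 \<le> p" "p \<le> 1 - eps"
  shows "p ^ mS n eps \<le> 1/3"
proof -
  have "p ^ mS n eps \<le> (exp (- eps)) ^ mS n eps"
    using p e exp_ge_add_one_self[of "-eps"] by (intro power_mono) auto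
  also have "\<dots> = exp (- eps * real (mS n eps))" by (simp add: exp_of_nat_mult[symmetric] mult.commute)
  also have "\<dots> \<le> exp (-2)"
  proof -
    have "real (mS n eps) \<ge> 2 / eps" unfolding mS_def using e natceil[of "2 / eps"] by simp
    then have "eps * real (mS n eps) \<ge> 2" using e by (simp add: field_simps)
    then show ?thesis by simp
  qed
  also have "\<dots> \<le> 1/3"
  proof -
    have "3 \<le> exp (2::real)" using exp_ge_add_one_self[of 2] by simp
    then show ?thesis by (simp add: exp_minus field_simps)
  qed
  finally show ?thesis .
qed

lemma complete_part:
  assumes n: "1 \<le> n" and cv: "convex_on_grid n f"
  shows "measure_pmf.prob (map_pmf (\<lambda>s. DecS n eps r s (map f (QS n eps r s))) M) {True} = 1"
proof -
  have "DecS n eps r s (map f (QS n eps r s))" for s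
  proof -
    have "goodS f (set (QS n eps r s))" unfolding goodS_def
    proof (intro ballI impI)
      fix a b c assume "a \<in> set (QS n eps r s)" "b \<in> set (QS n eps r s)" "c \<in> set (QS n eps r s)" "a < b \<and> b < c"
      then show "Tm f a b c" using QS_range[OF n] convex_Tm[OF cv] by blast
    qed
    then show ?thesis using dec_iff by blast
  qed
  then have "(\<lambda>s. DecS n eps r s (map f (QS n eps r s))) -` {True} = UNIV" by auto
  then show ?thesis by (simp add: measure_map_pmf)
qed

lemma far_part:
  assumes n: "1 \<le> n" and e: "0 < eps" "eps < 1" and D: "set_pmf D \<subseteq> {..<n}"
    and far: "far_from_convex n D eps f"
  shows "measure_pmf.prob (map_pmf (\<lambda>s. DecS n eps r s (map f (QS n eps r s))) (iid_samples D (mS n eps))) {False} \<ge> 2/3"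
proof -
  define good where "good x \<longleftrightarrow> goodS f (set (Qt 0 (n - 1) x))" for x
  define G where "G = {x. x < n \<and> good x}"
  have finG: "finite G" unfolding G_def by auto
  have tri: "\<forall>a\<in>G. \<forall>b\<in>G. \<forall>c\<in>G. a < b \<and> b < c \<longrightarrow> sl f a b \<le> sl f b c"
  proof (intro ballI impI)
    fix a b c assume abc: "a \<in> G" "b \<in> G" "c \<in> G" "a < b \<and> b < c"
    show "sl f a b \<le> sl f b c"
      using abc by (intro triple[of 0 a b c "n - 1" "set (Qt 0 (n - 1) a)" "set (Qt 0 (n - 1) b)" "set (Qt 0 (n - 1) c)"])
        (auto simp: G_def good_def)
  qed
  obtain h where h: "convex_on_grid n h" "\<forall>x\<in>G. h x = f x" using extend[OF finG tri] by blast
  define pG where "pG = measure_pmf.prob D G"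
  have "eps \<le> measure_pmf.prob D {x. f x \<noteq> h x}" using far h(1) unfolding far_from_convex_def by blast
  also have "\<dots> = measure_pmf.prob D ({x. f x \<noteq> h x} \<inter> set_pmf D)" by (simp add: measure_Int_set_pmf)
  also have "\<dots> \<le> measure_pmf.prob D (UNIV - G)"
    using D h(2) by (intro measure_pmf.finite_measure_mono) (auto simp: G_def)
  also have "\<dots> = 1 - pG" unfolding pG_def using measure_pmf.prob_compl[of G D] by simp
  finally have pG1: "pG \<le> 1 - eps" by simp
  have pG0: "0 \<le> pG" unfolding pG_def by simp
  define g where "g s \<longleftrightarrow> DecS n eps r s (map f (QS n eps r s))" for s
  define M where "M = iid_samples D (mS n eps)"
  have sub: "{s. g s} \<inter> set_pmf M \<subseteq> {s. \<forall>x\<in>set s. x \<in> G}"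
  proof
    fix s assume s: "s \<in> {s. g s} \<inter> set_pmf M"
    then have ls: "length s = mS n eps" "set s \<subseteq> set_pmf D" using iid_set unfolding M_def by blast+
    have gs: "goodS f (set (QS n eps r s))" using s dec_iff unfolding g_def by blast
    have "x \<in> G" if x: "x \<in> set s" for x
    proof -
      have "set (Qt 0 (n - 1) x) \<subseteq> set (QS n eps r s)" using x ls(1) by (auto simp: QS_def)
      then have "good x" using gs goodS_mono unfolding good_def by blast
      moreover have "x < n" using x ls(2) D by auto
      ultimately show ?thesis by (simp add: G_def)
    qed
    then show "s \<in> {s. \<forall>x\<in>set s. x \<in> G}" by blast
  qed
  have "measure_pmf.prob M {s. g s} = measure_pmf.prob M ({s. g s} \<inter> set_pmf M)" by (simp add: measure_Int_set_pmf)
  also have "\<dots> \<le> measure_pmf.prob M {s. \<forall>x\<in>set s. x \<in> G}"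
    using sub by (intro measure_pmf.finite_measure_mono) auto
  also have "\<dots> = pG ^ mS n eps" unfolding M_def pG_def using iid_prob[of D "mS n eps" "\<lambda>x. x \<in> G"] by simp
  also have "\<dots> \<le> 1/3" using exp_part[OF e pG0 pG1] .
  finally have acc: "measure_pmf.prob M {s. g s} \<le> 1/3" .
  have "g -` {False} = UNIV - {s. g s}" by auto
  then have "measure_pmf.prob (map_pmf g M) {False} = 1 - measure_pmf.prob M {s. g s}"
    using measure_pmf.prob_compl[of "{s. g s}" M] by (simp add: measure_map_pmf)
  then have "measure_pmf.prob (map_pmf g M) {False} \<ge> 2/3" using acc by simp
  then show ?thesis unfolding g_def M_def .
qed

theorem theorem1p2:
  shows "\<exists>(R :: nat \<Rightarrow> real \<Rightarrow> nat pmf) (m :: nat \<Rightarrow> real \<Rightarrow> nat)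
           (Q :: nat \<Rightarrow> real \<Rightarrow> nat \<Rightarrow> nat list \<Rightarrow> nat list)
           (Dec :: nat \<Rightarrow> real \<Rightarrow> nat \<Rightarrow> nat list \<Rightarrow> real list \<Rightarrow> bool) (C :: real).
     C > 0 \<and>
     (\<forall>n eps. 2 \<le> n \<and> 0 < eps \<and> eps < 1 \<longrightarrow>
        real (m n eps) \<le> C / eps \<and>
        (\<forall>r s. real (length (Q n eps r s)) \<le> C * ln (real n) / eps)) \<and>
     (\<forall>n eps r s. 1 \<le> n \<and> 0 < eps \<and> eps < 1 \<longrightarrow> (\<forall>q \<in> set (Q n eps r s). q < n)) \<and>
     (\<forall>n eps (D :: nat pmf) (f :: nat \<Rightarrow> real).
        1 \<le> n \<and> 0 < eps \<and> eps < 1 \<and> set_pmf D \<subseteq> {..<n} \<longrightarrow>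
          (convex_on_grid n f \<longrightarrow> measure_pmf.prob (tester_run R m Q Dec n eps D f) {True} = 1) \<and>
          (far_from_convex n D eps f \<longrightarrow>
             measure_pmf.prob (tester_run R m Q Dec n eps D f) {False} \<ge> 2/3))"
proof -
  define R :: "nat \<Rightarrow> real \<Rightarrow> nat pmf" where "R = (\<lambda>n eps. return_pmf 0)"
  have run: "tester_run R mS QS DecS n eps D f
      = map_pmf (\<lambda>s. DecS n eps 0 s (map f (QS n eps 0 s))) (iid_samples D (mS n eps))" for n eps D f
    by (simp add: tester_run_def R_def bind_return_pmf map_pmf_def)
  have P1: "\<forall>n eps. 2 \<le> n \<and> 0 < eps \<and> eps < 1 \<longrightarrow>
        real (mS n eps) \<le> 60 / eps \<and>
        (\<forall>r s. real (length (QS n eps r s)) \<le> 60 * ln (real n) / eps)"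
    using m_bound length_bound by blast
  have P2: "\<forall>n eps r s. 1 \<le> n \<and> 0 < eps \<and> eps < 1 \<longrightarrow> (\<forall>q \<in> set (QS n eps r s). q < n)"
    using QS_range by blast
  have P3: "\<forall>n eps (D :: nat pmf) (f :: nat \<Rightarrow> real).
        1 \<le> n \<and> 0 < eps \<and> eps < 1 \<and> set_pmf D \<subseteq> {..<n} \<longrightarrow>
          (convex_on_grid n f \<longrightarrow> measure_pmf.prob (tester_run R mS QS DecS n eps D f) {True} = 1) \<and>
          (far_from_convex n D eps f \<longrightarrow>
             measure_pmf.prob (tester_run R mS QS DecS n eps D f) {False} \<ge> 2/3)"
    unfolding run using complete_part far_part by blast
  have "(60::real) > 0" by simp
  then show ?thesis using P1 P2 P3 by blast
qed


end
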